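(* Let $(V,m)$ be a discrete measure space and $L$ a locally finite selfadjoint operator on $\ell^2(V,m)$ with kernel $l$. Then for $\varphi\in C(V)$ and $\lambda\in\mathbb{R}$ the following are equivalent: (i) $\varphi$ is a generalized eigenfunction of $L$ to the eigenvalue $\lambda$; (ii) $\varphi$ is a $C_c(V)$-eigenfunction of $L$ to the eigenvalue $\lambda$, where $\varphi$ is regarded as the linear functional $u\mapsto(\varphi,u)_m$ on $C_c(V)$.
   Context: A discrete measure space $(V,m)$ is a finite or countable set $V$ with $m:V\to(0,\infty)$; $C(V)$ is the set of all functions $V\to\mathbb{C}$, $C_c(V)$ those of finite support; $\ell^2(V,m)$ has inner product $\langle v,u\rangle=\sum_x\overline{v(x)}u(x)m(x)$. An operator $L$ on $\ell^2(V,m)$ is locally finite if $C_c(V)\subset D(L)$ and there is $l:V\times V\to\mathbb{C}$ with $\{y:l(x,y)\ne0\}$ finite for each $x$ such that $L$ is a restriction of $\tilde L$, $(\tilde Lw)(x)=\sum_y l(x,y)w(y)m(y)$, $w\in C(V)$. $\varphi\in C(V)$ is a generalized eigenfunction to $\lambda$ if $(\tilde L-\lambda)\varphi\equiv0$. The pairing is $(g,u)_m=\sum_x\overline{g(x)}u(x)m(x)$ for $g\in C(V)$, $u\in C_c(V)$. A linear functional $\varphi$ on $C_c(V)$ is a $C_c(V)$-eigenfunction of $L$ to $\lambda$ if $(\varphi,Lu)=\lambda(\varphi,u)$ for all $u\in C_c(V)\cap D(L)$ with $Lu\in C_c(V)$. *)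

theory Defs
  imports "HOL-Analysis.Analysis"
begin

text \<open>Discrete measure space: the vertex set is the (finite or countable) type 'v,
  the measure is m :: 'v => real with m x > 0. Functions V -> C are 'v => complex.\<close>

definition disc_measure :: "('v::countable \<Rightarrow> real) \<Rightarrow> bool" where
  "disc_measure m \<longleftrightarrow> (\<forall>x. m x > 0)"

definition Cc :: "('v \<Rightarrow> complex) set" where
  "Cc = {u. finite {x. u x \<noteq> 0}}"

definition l2 :: "('v \<Rightarrow> real) \<Rightarrow> ('v \<Rightarrow> complex) set" where
  "l2 m = {u. (\<lambda>x. (cmod (u x))\<^sup>2 * m x) summable_on UNIV}"

definition ip :: "('v \<Rightarrow> real) \<Rightarrow> ('v \<Rightarrow> complex) \<Rightarrow> ('v \<Rightarrow> complex) \<Rightarrow> complex" where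
  "ip m v u = (\<Sum>\<^sub>\<infinity>x. cnj (v x) * u x * complex_of_real (m x))"

definition pair :: "('v \<Rightarrow> real) \<Rightarrow> ('v \<Rightarrow> complex) \<Rightarrow> ('v \<Rightarrow> complex) \<Rightarrow> complex" where
  "pair m g u = (\<Sum>x\<in>{x. u x \<noteq> 0}. cnj (g x) * u x * complex_of_real (m x))"

definition is_operator :: "('v \<Rightarrow> real) \<Rightarrow> ('v \<Rightarrow> complex) set \<Rightarrow> (('v \<Rightarrow> complex) \<Rightarrow> ('v \<Rightarrow> complex)) \<Rightarrow> bool" where
  "is_operator m D L \<longleftrightarrow> D \<subseteq> l2 m \<and> (\<forall>u\<in>D. L u \<in> l2 m) \<and>
     (\<forall>u\<in>D. \<forall>v\<in>D. \<forall>a b::complex. (\<lambda>x. a * u x + b * v x) \<in> D \<and>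
        L (\<lambda>x. a * u x + b * v x) = (\<lambda>x. a * L u x + b * L v x))"

text \<open>Selfadjointness L = L*: the domain of the adjoint
  D(L*) = {v in l2. exists w in l2. for all u in D. <v, Lu> = <w, u>} equals D,
  and L* v = L v for v in D, i.e. <v, Lu> = <Lv, u> for all u, v in D.\<close>
definition selfadjoint :: "('v \<Rightarrow> real) \<Rightarrow> ('v \<Rightarrow> complex) set \<Rightarrow> (('v \<Rightarrow> complex) \<Rightarrow> ('v \<Rightarrow> complex)) \<Rightarrow> bool" where
  "selfadjoint m D L \<longleftrightarrow> is_operator m D L \<and>
     (\<forall>v\<in>l2 m. v \<in> D \<longleftrightarrow> (\<exists>w\<in>l2 m. \<forall>u\<in>D. ip m v (L u) = ip m w u)) \<and>
     (\<forall>u\<in>D. \<forall>v\<in>D. ip m v (L u) = ip m (L v) u)"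

definition Ltilde :: "('v \<Rightarrow> 'v \<Rightarrow> complex) \<Rightarrow> ('v \<Rightarrow> real) \<Rightarrow> ('v \<Rightarrow> complex) \<Rightarrow> ('v \<Rightarrow> complex)" where
  "Ltilde l m w = (\<lambda>x. \<Sum>y\<in>{y. l x y \<noteq> 0}. l x y * w y * complex_of_real (m y))"

definition locally_finite :: "('v \<Rightarrow> real) \<Rightarrow> ('v \<Rightarrow> complex) set \<Rightarrow> (('v \<Rightarrow> complex) \<Rightarrow> ('v \<Rightarrow> complex)) \<Rightarrow> ('v \<Rightarrow> 'v \<Rightarrow> complex) \<Rightarrow> bool" where
  "locally_finite m D L l \<longleftrightarrow> Cc \<subseteq> D \<and> (\<forall>x. finite {y. l x y \<noteq> 0}) \<and> (\<forall>u\<in>D. L u = Ltilde l m u)"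

definition gen_eigenfunction :: "('v \<Rightarrow> 'v \<Rightarrow> complex) \<Rightarrow> ('v \<Rightarrow> real) \<Rightarrow> ('v \<Rightarrow> complex) \<Rightarrow> complex \<Rightarrow> bool" where
  "gen_eigenfunction l m \<phi> lam \<longleftrightarrow> (\<forall>x. Ltilde l m \<phi> x - lam * \<phi> x = 0)"

text \<open>phi, regarded as the functional u |-> (phi,u)_m on C_c(V), is a C_c(V)-eigenfunction.\<close>
definition Cc_eigenfunction :: "('v \<Rightarrow> real) \<Rightarrow> ('v \<Rightarrow> complex) set \<Rightarrow> (('v \<Rightarrow> complex) \<Rightarrow> ('v \<Rightarrow> complex)) \<Rightarrow> ('v \<Rightarrow> complex) \<Rightarrow> complex \<Rightarrow> bool" where
  "Cc_eigenfunction m D L \<phi> lam \<longleftrightarrow>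
     (\<forall>u. u \<in> Cc \<and> u \<in> D \<and> L u \<in> Cc \<longrightarrow> pair m \<phi> (L u) = lam * pair m \<phi> u)"

end

theory Submission
  imports Defs
begin

lemma infsum_single_pt:
  fixes f :: "'a \<Rightarrow> complex"
  assumes "\<And>z. z \<noteq> x \<Longrightarrow> f z = 0"
  shows "infsum f UNIV = f x"
proof -
  have "infsum f UNIV = infsum f {x}"
    by (rule infsum_cong_neutral) (use assms in auto)
  then show ?thesis by simp
qed

definition dlt :: "'v \<Rightarrow> 'v \<Rightarrow> complex" where
  "dlt x = (\<lambda>z. if z = x then 1 else 0)"

lemma dlt_Cc: "dlt x \<in> Cc"
proof -
  have "{z. dlt x z \<noteq> 0} = {x}" by (auto simp: dlt_def)
  then show ?thesis by (simp add: Cc_def)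
qed

lemma Ltilde_dlt:
  assumes "finite {w. l y w \<noteq> 0}"
  shows "Ltilde l m (dlt x) y = l y x * complex_of_real (m x)"
proof -
  have "Ltilde l m (dlt x) y = (\<Sum>w\<in>{w. l y w \<noteq> 0}. if w = x then l y w * complex_of_real (m w) else 0)"
    unfolding Ltilde_def dlt_def by (intro sum.cong) auto
  also have "\<dots> = (if x \<in> {w. l y w \<noteq> 0} then l y x * complex_of_real (m x) else 0)"
    using assms by (simp add: sum.delta')
  also have "\<dots> = l y x * complex_of_real (m x)" by auto
  finally show ?thesis .
qed

lemma kernel_sym:
  assumes dm: "disc_measure m" and sa: "selfadjoint m D L" and lf: "locally_finite m D L l"
  shows "l y x = cnj (l x y)"
proof -
  have fin: "\<And>a. finite {w. l a w \<noteq> 0}" using lf by (simp add: locally_finite_def)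
  have inD: "\<And>a. dlt a \<in> D" using lf dlt_Cc unfolding locally_finite_def by (meson subsetD)
  have Ld: "\<And>a b. L (dlt a) b = l b a * complex_of_real (m a)"
    using lf inD Ltilde_dlt[OF fin] by (simp add: locally_finite_def)
  have "ip m (dlt y) (L (dlt x)) = ip m (L (dlt y)) (dlt x)"
    using sa inD by (simp add: selfadjoint_def)
  moreover have "ip m (dlt y) (L (dlt x)) = l y x * complex_of_real (m x) * complex_of_real (m y)"
    unfolding ip_def by (subst infsum_single_pt[where x=y]) (auto simp: Ld[unfolded dlt_def] dlt_def)
  moreover have "ip m (L (dlt y)) (dlt x) = cnj (l x y) * complex_of_real (m y) * complex_of_real (m x)"
    unfolding ip_def by (subst infsum_single_pt[where x=x]) (auto simp: Ld[unfolded dlt_def] dlt_def)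
  ultimately have "l y x * (complex_of_real (m x) * complex_of_real (m y)) = cnj (l x y) * (complex_of_real (m x) * complex_of_real (m y))"
    by (simp add: ac_simps)
  moreover have "complex_of_real (m x) * complex_of_real (m y) \<noteq> 0"
    using dm by (simp add: disc_measure_def) (metis less_irrefl)
  ultimately show ?thesis by simp
qed

theorem lemma5p1:
  fixes m :: "'v::countable \<Rightarrow> real"
    and D :: "('v \<Rightarrow> complex) set"
    and L :: "('v \<Rightarrow> complex) \<Rightarrow> ('v \<Rightarrow> complex)"
    and l :: "'v \<Rightarrow> 'v \<Rightarrow> complex"
    and \<phi> :: "'v \<Rightarrow> complex"
    and lam :: real
  assumes "disc_measure m"
    and "selfadjoint m D L"
    and "locally_finite m D L l"
  shows "gen_eigenfunction l m \<phi> (complex_of_real lam) \<longleftrightarrow>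
         Cc_eigenfunction m D L \<phi> (complex_of_real lam)"
proof -
  note dm = assms(1) and sa = assms(2) and lf = assms(3)
  have fin: "\<And>a. finite {w. l a w \<noteq> 0}" using lf by (simp add: locally_finite_def)
  have sym: "\<And>a b. l a b = cnj (l b a)" using kernel_sym[OF dm sa lf] .
  have setsym: "\<And>y. {z. l z y \<noteq> 0} = {z. l y z \<noteq> 0}"
  proof -
    fix y
    have "\<And>z. l z y = cnj (l y z)" by (rule sym)
    then show "{z. l z y \<noteq> 0} = {z. l y z \<noteq> 0}" by simp
  qed
  have fin2: "\<And>a. finite {w. l w a \<noteq> 0}" using fin setsym by simp
  have inD: "\<And>a. dlt a \<in> D" using lf dlt_Cc unfolding locally_finite_def by (meson subsetD)
  have LD: "\<And>u. u \<in> D \<Longrightarrow> L u = Ltilde l m u" using lf by (simp add: locally_finite_def)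
  have Ld: "\<And>a b. L (dlt a) b = l b a * complex_of_real (m a)"
    using LD inD Ltilde_dlt[OF fin] by simp
  have cnjL: "\<And>y. (\<Sum>z\<in>{z. l z y \<noteq> 0}. cnj (\<phi> z) * l z y * complex_of_real (m z)) = cnj (Ltilde l m \<phi> y)"
    unfolding Ltilde_def setsym cnj_sum
  proof (intro sum.cong refl)
    fix y z
    have "l z y = cnj (l y z)" by (rule sym)
    then show "cnj (\<phi> z) * l z y * complex_of_real (m z) = cnj (l y z * \<phi> z * complex_of_real (m z))"
      by simp
  qed
  show ?thesis
  proof
    assume ge: "gen_eigenfunction l m \<phi> (complex_of_real lam)"
    then have ge': "\<And>y. Ltilde l m \<phi> y = complex_of_real lam * \<phi> y"
      by (simp add: gen_eigenfunction_def)
    show "Cc_eigenfunction m D L \<phi> (complex_of_real lam)"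
      unfolding Cc_eigenfunction_def
    proof (intro allI impI)
      fix u assume u: "u \<in> Cc \<and> u \<in> D \<and> L u \<in> Cc"
      define U where "U = {y. u y \<noteq> 0}"
      define S where "S = (\<Union>y\<in>U. {z. l z y \<noteq> 0})"
      have finU: "finite U" using u by (simp add: U_def Cc_def)
      have finS: "finite S" unfolding S_def using finU fin2 by blast
      have Lu: "\<And>z. L u z = (\<Sum>y\<in>U. l z y * u y * complex_of_real (m y))"
      proof -
        fix z
        have "L u z = (\<Sum>y\<in>{y. l z y \<noteq> 0}. l z y * u y * complex_of_real (m y))"
          using LD u by (simp add: Ltilde_def)
        also have "\<dots> = (\<Sum>y\<in>{y. l z y \<noteq> 0} \<union> U. l z y * u y * complex_of_real (m y))"
          by (rule sum.mono_neutral_left) (use fin finU in \<open>auto simp: U_def\<close>)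
        also have "\<dots> = (\<Sum>y\<in>U. l z y * u y * complex_of_real (m y))"
          by (rule sum.mono_neutral_right) (use fin finU in \<open>auto simp: U_def\<close>)
        finally show "L u z = (\<Sum>y\<in>U. l z y * u y * complex_of_real (m y))" .
      qed
      have supp: "{z. L u z \<noteq> 0} \<subseteq> S"
      proof
        fix z assume z: "z \<in> {z. L u z \<noteq> 0}"
        show "z \<in> S"
        proof (rule ccontr)
          assume "z \<notin> S"
          then have "\<And>y. y \<in> U \<Longrightarrow> l z y = 0" unfolding S_def by blast
          then have "L u z = 0" unfolding Lu by (intro sum.neutral) simp
          then show False using z by simp
        qed
      qed
      have "pair m \<phi> (L u) = (\<Sum>z\<in>S. cnj (\<phi> z) * L u z * complex_of_real (m z))"
        unfolding pair_def by (rule sum.mono_neutral_left) (use finS supp in auto)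
      also have "\<dots> = (\<Sum>z\<in>S. \<Sum>y\<in>U. u y * complex_of_real (m y) * (cnj (\<phi> z) * l z y * complex_of_real (m z)))"
        unfolding Lu sum_distrib_left sum_distrib_right by (simp add: ac_simps)
      also have "\<dots> = (\<Sum>y\<in>U. \<Sum>z\<in>S. u y * complex_of_real (m y) * (cnj (\<phi> z) * l z y * complex_of_real (m z)))"
        by (rule sum.swap)
      also have "\<dots> = (\<Sum>y\<in>U. u y * complex_of_real (m y) * cnj (Ltilde l m \<phi> y))"
      proof (intro sum.cong refl)
        fix y assume y: "y \<in> U"
        have "(\<Sum>z\<in>S. cnj (\<phi> z) * l z y * complex_of_real (m z)) = (\<Sum>z\<in>{z. l z y \<noteq> 0}. cnj (\<phi> z) * l z y * complex_of_real (m z))"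
          by (rule sum.mono_neutral_right) (use finS y in \<open>auto simp: S_def\<close>)
        then show "(\<Sum>z\<in>S. u y * complex_of_real (m y) * (cnj (\<phi> z) * l z y * complex_of_real (m z))) = u y * complex_of_real (m y) * cnj (Ltilde l m \<phi> y)"
          using cnjL by (simp add: sum_distrib_left[symmetric])
      qed
      also have "\<dots> = complex_of_real lam * pair m \<phi> u"
        unfolding pair_def U_def ge' sum_distrib_left by (intro sum.cong refl) (simp add: ac_simps)
      finally show "pair m \<phi> (L u) = complex_of_real lam * pair m \<phi> u" .
    qed
  next
    assume ce: "Cc_eigenfunction m D L \<phi> (complex_of_real lam)"
    show "gen_eigenfunction l m \<phi> (complex_of_real lam)"
      unfolding gen_eigenfunction_def
    proof
      fix x
      have mx: "m x > 0" using dm by (simp add: disc_measure_def)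
      have sub: "{z. L (dlt x) z \<noteq> 0} \<subseteq> {z. l z x \<noteq> 0}" using Ld by auto
      have LC: "L (dlt x) \<in> Cc" unfolding Cc_def using finite_subset[OF sub fin2] by simp
      have eq: "pair m \<phi> (L (dlt x)) = complex_of_real lam * pair m \<phi> (dlt x)"
        by (rule ce[unfolded Cc_eigenfunction_def, rule_format]) (simp add: dlt_Cc inD LC)
      have p1: "pair m \<phi> (dlt x) = cnj (\<phi> x) * complex_of_real (m x)"
      proof -
        have "{z. dlt x z \<noteq> 0} = {x}" by (auto simp: dlt_def)
        then show ?thesis by (simp add: pair_def dlt_def)
      qed
      have "pair m \<phi> (L (dlt x)) = (\<Sum>z\<in>{z. l z x \<noteq> 0}. cnj (\<phi> z) * L (dlt x) z * complex_of_real (m z))"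
        unfolding pair_def by (rule sum.mono_neutral_left) (use fin2 sub in auto)
      also have "\<dots> = complex_of_real (m x) * (\<Sum>z\<in>{z. l z x \<noteq> 0}. cnj (\<phi> z) * l z x * complex_of_real (m z))"
        unfolding Ld sum_distrib_left by (intro sum.cong refl) (simp add: ac_simps)
      also have "\<dots> = complex_of_real (m x) * cnj (Ltilde l m \<phi> x)" by (simp add: cnjL)
      finally have "complex_of_real (m x) * cnj (Ltilde l m \<phi> x) = complex_of_real (m x) * (complex_of_real lam * cnj (\<phi> x))"
        using eq p1 by (metis mult.assoc mult.commute)
      then have "cnj (Ltilde l m \<phi> x) = complex_of_real lam * cnj (\<phi> x)" using mx by simp
      then have "cnj (cnj (Ltilde l m \<phi> x)) = cnj (complex_of_real lam * cnj (\<phi> x))" by simp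
      then show "Ltilde l m \<phi> x - complex_of_real lam * \<phi> x = 0" by simp
    qed
  qed
qed

end
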